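(* Let $(\mathcal{V},\mathcal{I})$ be a finite connected graph with vertex set $\mathcal{V}$ and set of unoriented edges $\mathcal{I}$ (each pair of vertices joined by at most one edge), with $N$ edges, each edge $(i,j)$ having length $L_{ij}>0$. Let $(S_i)_{i\in\mathcal{V}}$ satisfy $\sum_{i\in\mathcal{V}}S_i=0$, and let $\nu>0$ and $0<\gamma<1$. For a vector of conductivities $C=(C_{ij})\in\mathbb{R}^N_+$, let pressures $(P_i)_{i\in\mathcal{V}}$ solve the Kirchhoff law $$\sum_{j\in N(i)} C_{ij}\frac{P_i-P_j}{L_{ij}}=S_i\quad\text{for all }i\in\mathcal{V},$$ and define fluxes $Q_{ij}[C]=C_{ij}\frac{P_i-P_j}{L_{ij}}$, and the energy $$E[C]=\sum_{(i,j)\in\mathcal{I},\,i<j}\Big(\frac{Q_{ij}[C]^2}{C_{ij}}+\frac{\nu}{\gamma}C_{ij}^\gamma\Big)L_{ij}.$$ Then the global minimizer $C\in\mathbb{R}^N_+$ of $E$ constrained by the Kirchhoff law contains no loops, i.e., there exists no closed circle of edges $\{(i_1,i_2),(i_2,i_3),\dots,(i_K,i_1)\}\subset\mathcal{I}$ such that the fluxes $Q_{i_1i_2},Q_{i_2i_3},\dots,Q_{i_Ki_1}$ are all nonzero.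
   Context: $N(i)$ denotes the set of neighbours of vertex $i$. Fluxes are oriented: $Q_{ij}=-Q_{ji}$. The sum over $i<j$ counts each unoriented edge once. For a given $C$, the Kirchhoff system is solvable (uniquely up to an additive constant) when the graph formed by edges with positive conductivity is connected. *)

theory Defs
  imports Complex_Main
begin

definition simple_graph :: "'v set \<Rightarrow> ('v \<Rightarrow> 'v \<Rightarrow> bool) \<Rightarrow> bool" where
  "simple_graph V E \<longleftrightarrow> finite V \<and> (\<forall>i j. E i j \<longrightarrow> i \<in> V \<and> j \<in> V \<and> i \<noteq> j \<and> E j i)"

definition connected_graph :: "'v set \<Rightarrow> ('v \<Rightarrow> 'v \<Rightarrow> bool) \<Rightarrow> bool" where
  "connected_graph V E \<longleftrightarrow> V \<noteq> {} \<and> (\<forall>i\<in>V. \<forall>j\<in>V. E\<^sup>*\<^sup>* i j)"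

definition nbrs :: "'v set \<Rightarrow> ('v \<Rightarrow> 'v \<Rightarrow> bool) \<Rightarrow> 'v \<Rightarrow> 'v set" where
  "nbrs V E i = {j \<in> V. E i j}"

definition admissible_cond :: "('v \<Rightarrow> 'v \<Rightarrow> bool) \<Rightarrow> ('v \<Rightarrow> 'v \<Rightarrow> real) \<Rightarrow> bool" where
  "admissible_cond E C \<longleftrightarrow> (\<forall>i j. E i j \<longrightarrow> C i j \<ge> 0 \<and> C i j = C j i)"

definition flux :: "('v \<Rightarrow> 'v \<Rightarrow> real) \<Rightarrow> ('v \<Rightarrow> 'v \<Rightarrow> real) \<Rightarrow> ('v \<Rightarrow> real) \<Rightarrow> 'v \<Rightarrow> 'v \<Rightarrow> real" where
  "flux L C P i j = C i j * (P i - P j) / L i j"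

definition kirchhoff :: "'v set \<Rightarrow> ('v \<Rightarrow> 'v \<Rightarrow> bool) \<Rightarrow> ('v \<Rightarrow> 'v \<Rightarrow> real) \<Rightarrow> ('v \<Rightarrow> real)
    \<Rightarrow> ('v \<Rightarrow> 'v \<Rightarrow> real) \<Rightarrow> ('v \<Rightarrow> real) \<Rightarrow> bool" where
  "kirchhoff V E L S C P \<longleftrightarrow> (\<forall>i\<in>V. (\<Sum>j\<in>nbrs V E i. flux L C P i j) = S i)"

text \<open>Energy; each unoriented edge counted once via i < j. Note Q^2/C with C = 0 (then Q = 0) is 0.\<close>
definition energy :: "('v::linorder) set \<Rightarrow> ('v \<Rightarrow> 'v \<Rightarrow> bool) \<Rightarrow> ('v \<Rightarrow> 'v \<Rightarrow> real) \<Rightarrow> real \<Rightarrow> real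
    \<Rightarrow> ('v \<Rightarrow> 'v \<Rightarrow> real) \<Rightarrow> ('v \<Rightarrow> real) \<Rightarrow> real" where
  "energy V E L \<nu> \<gamma> C P = (\<Sum>(i,j)\<in>{(i,j). i \<in> V \<and> j \<in> V \<and> E i j \<and> i < j}.
       ((flux L C P i j)\<^sup>2 / C i j + \<nu> / \<gamma> * (C i j) powr \<gamma>) * L i j)"

definition is_cycle :: "('v \<Rightarrow> 'v \<Rightarrow> bool) \<Rightarrow> 'v list \<Rightarrow> bool" where
  "is_cycle E vs \<longleftrightarrow> length vs \<ge> 3 \<and> distinct vs \<and>
     (\<forall>k < length vs. E (vs ! k) (vs ! ((k + 1) mod length vs)))"

end

theory Submission imports Defs begin
lemma powr_strict_bern:
  fixes g x :: real assumes g: "0<g" "g<1" and x: "0<x" "x\<noteq>1"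
  shows "x powr g < 1 + g*(x-1)"
proof -
  define h where "h = (\<lambda>y::real. 1 + g*(y-1) - y powr g)"
  have der: "DERIV h y :> g - g * y powr (g-1)" if "0<y" for y
    unfolding h_def using that
    by (auto intro!: derivative_eq_intros)
  have cont: "continuous_on {a..b} h" if "0<a" for a b
  proof (rule continuous_at_imp_continuous_on, intro ballI)
    fix y assume "y \<in> {a..b}" then have "0 < y" using that by auto
    then show "isCont h y" using der DERIV_isCont by blast
  qed
  have h1: "h 1 = 0" by (simp add: h_def)
  show ?thesis
  proof (cases "x < 1")
    case True
    have "h x > h 1"
    proof (rule DERIV_neg_imp_decreasing_open[OF True _ cont[OF x(1)]])
      fix y assume y: "x < y" "y < 1"
      have "1 powr (g-1) < y powr (g-1)"
        by (rule powr_less_mono2_neg) (use g x y in auto)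
      then have "g < g * y powr (g-1)" using g by simp
      then show "\<exists>d. DERIV h y :> d \<and> d < 0" using der[of y] y x by force
    qed
    then show ?thesis using h1 by (simp add: h_def)
  next
    case False
    then have x1: "1 < x" using x by simp
    have "h 1 < h x"
    proof (rule DERIV_pos_imp_increasing_open[OF x1 _ cont])
      fix y assume y: "1 < y" "y < x"
      have "y powr (g-1) < 1 powr (g-1)"
        by (rule powr_less_mono2_neg) (use g x y in auto)
      then have "g * y powr (g-1) < g" using g by simp
      then show "\<exists>d. DERIV h y :> d \<and> d > 0" using der[of y] y x by force
    qed simp
    then show ?thesis using h1 by (simp add: h_def)
  qed
qed

lemma powr_pair:
  fixes g s :: real assumes g: "0<g" "g<1" and s: "\<bar>s\<bar> < 1"
  shows "(1+s) powr g + (1-s) powr g \<le> 2" and "s \<noteq> 0 \<Longrightarrow> (1+s) powr g + (1-s) powr g < 2"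
proof -
  show "s \<noteq> 0 \<Longrightarrow> (1+s) powr g + (1-s) powr g < 2"
  proof -
    assume "s \<noteq> 0"
    have "(1+s) powr g < 1 + g*s" using powr_strict_bern[OF g, of "1+s"] s \<open>s\<noteq>0\<close> by auto
    moreover have "(1-s) powr g < 1 - g*s" using powr_strict_bern[OF g, of "1-s"] s \<open>s\<noteq>0\<close> by auto
    ultimately show ?thesis by linarith
  qed
  then show "(1+s) powr g + (1-s) powr g \<le> 2" by (cases "s=0") auto
qed

lemma term_pair:
  fixes C Q L \<nu> \<gamma> s :: real
  assumes C: "C > 0" and Q: "Q \<noteq> 0" and L: "L > 0" and nu: "\<nu> > 0" and g: "0 < \<gamma>" "\<gamma> < 1"
    and s: "\<bar>s\<bar> < 1" "s \<noteq> 0"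
  shows "((Q*(1+s))\<^sup>2/(C*(1+s)) + \<nu>/\<gamma>*(C*(1+s)) powr \<gamma>)*L
       + ((Q*(1-s))\<^sup>2/(C*(1-s)) + \<nu>/\<gamma>*(C*(1-s)) powr \<gamma>)*L
       < 2*((Q\<^sup>2/C + \<nu>/\<gamma>*C powr \<gamma>)*L)"
proof -
  have p: "1+s > 0" "1-s>0" using s by auto
  have e1: "(Q*(1+s))\<^sup>2/(C*(1+s)) = Q\<^sup>2/C*(1+s)"
    using p C by (subst nonzero_divide_eq_eq) (auto simp: power2_eq_square)
  have e2: "(Q*(1-s))\<^sup>2/(C*(1-s)) = Q\<^sup>2/C*(1-s)"
    using p C by (subst nonzero_divide_eq_eq) (auto simp: power2_eq_square)
  have e3: "(C*(1+s)) powr \<gamma> = C powr \<gamma> * (1+s) powr \<gamma>" using p C by (simp add: powr_mult)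
  have e4: "(C*(1-s)) powr \<gamma> = C powr \<gamma> * (1-s) powr \<gamma>" using p C by (simp add: powr_mult)
  have k: "(1+s) powr \<gamma> + (1-s) powr \<gamma> < 2" using powr_pair(2)[OF g s] .
  have cg: "\<nu>/\<gamma>*C powr \<gamma> > 0" using C nu g by simp
  have "\<nu>/\<gamma>*C powr \<gamma> * ((1+s) powr \<gamma> + (1-s) powr \<gamma>) < \<nu>/\<gamma>*C powr \<gamma> * 2"
    using k cg by (simp only: mult_strict_left_mono)
  then have X0: "\<nu>/\<gamma>*C powr \<gamma> * (1+s) powr \<gamma> + \<nu>/\<gamma>*C powr \<gamma> * (1-s) powr \<gamma> < \<nu>/\<gamma>*C powr \<gamma> * 2"
    by (simp only: distrib_left)
  have X: "\<nu>/\<gamma>*(C powr \<gamma> * (1+s) powr \<gamma>) + \<nu>/\<gamma>*(C powr \<gamma> * (1-s) powr \<gamma>) < 2*(\<nu>/\<gamma>*C powr \<gamma>)"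
    using X0 by (simp only: mult.assoc mult.commute[of 2])
  have Y: "Q\<^sup>2/C*(1+s) + Q\<^sup>2/C*(1-s) = 2*(Q\<^sup>2/C)" unfolding ring_distribs by simp
  from X Y have "(Q\<^sup>2/C*(1+s) + \<nu>/\<gamma>*(C powr \<gamma> * (1+s) powr \<gamma>)) + (Q\<^sup>2/C*(1-s) + \<nu>/\<gamma>*(C powr \<gamma> * (1-s) powr \<gamma>))
     < 2*(Q\<^sup>2/C + \<nu>/\<gamma>*C powr \<gamma>)" by (simp add: distrib_left)
  then have "((Q\<^sup>2/C*(1+s) + \<nu>/\<gamma>*(C powr \<gamma> * (1+s) powr \<gamma>)) + (Q\<^sup>2/C*(1-s) + \<nu>/\<gamma>*(C powr \<gamma> * (1-s) powr \<gamma>))) * L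
     < (2*(Q\<^sup>2/C + \<nu>/\<gamma>*C powr \<gamma>)) * L" using L by (rule mult_strict_right_mono)
  then show ?thesis unfolding e1 e2 e3 e4 by (simp only: distrib_right mult.assoc)
qed

lemma rot_sum:
  fixes f :: "nat \<Rightarrow> real" assumes "n > 0"
  shows "(\<Sum>k<n. f ((k+1) mod n)) = (\<Sum>k<n. f k)"
proof -
  obtain m where n: "n = Suc m" using assms by (cases n) auto
  have "(\<Sum>k<Suc m. f ((k+1) mod Suc m)) = (\<Sum>k<m. f ((k+1) mod Suc m)) + f 0"
    by (simp add: sum.lessThan_Suc)
  also have "(\<Sum>k<m. f ((k+1) mod Suc m)) = (\<Sum>k<m. f (Suc k))"
    by (rule sum.cong) auto
  also have "(\<Sum>k<m. f (Suc k)) + f 0 = (\<Sum>k<Suc m. f k)"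
    by (subst sum.lessThan_Suc_shift) simp
  finally show ?thesis using n by simp
qed

theorem theorem2p2:
  fixes V :: "('v::linorder) set" and E :: "'v \<Rightarrow> 'v \<Rightarrow> bool"
    and L :: "'v \<Rightarrow> 'v \<Rightarrow> real" and S :: "'v \<Rightarrow> real" and \<nu> \<gamma> :: real
    and C :: "'v \<Rightarrow> 'v \<Rightarrow> real" and P :: "'v \<Rightarrow> real"
  assumes graph: "simple_graph V E" and conn: "connected_graph V E"
    and L_pos: "\<forall>i j. E i j \<longrightarrow> L i j > 0" and L_sym: "\<forall>i j. E i j \<longrightarrow> L i j = L j i"
    and S_sum: "(\<Sum>i\<in>V. S i) = 0"
    and nu: "\<nu> > 0" and gamma: "0 < \<gamma>" "\<gamma> < 1"
    and C_adm: "admissible_cond E C" and P_kirch: "kirchhoff V E L S C P"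
    and C_min: "\<forall>C' P'. admissible_cond E C' \<and> kirchhoff V E L S C' P' \<longrightarrow>
                   energy V E L \<nu> \<gamma> C P \<le> energy V E L \<nu> \<gamma> C' P'"
  shows "\<not> (\<exists>vs. is_cycle E vs \<and>
            (\<forall>k < length vs. flux L C P (vs ! k) (vs ! ((k + 1) mod length vs)) \<noteq> 0))"
proof
  assume "\<exists>vs. is_cycle E vs \<and>
            (\<forall>k < length vs. flux L C P (vs ! k) (vs ! ((k + 1) mod length vs)) \<noteq> 0)"
  then obtain vs where cyc: "is_cycle E vs"
    and fl: "\<forall>k < length vs. flux L C P (vs ! k) (vs ! ((k + 1) mod length vs)) \<noteq> 0" by blast
  define n where "n = length vs"
  define u where "u k = vs ! k" for k
  define w where "w k = vs ! ((k+1) mod n)" for k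
  define Q where "Q = flux L C P"
  have n3: "n \<ge> 3" and dist: "distinct vs" and Ecyc: "\<And>k. k < n \<Longrightarrow> E (u k) (w k)"
    using cyc unfolding is_cycle_def n_def u_def w_def by auto
  have Qcyc: "\<And>k. k < n \<Longrightarrow> Q (u k) (w k) \<noteq> 0"
    using fl unfolding n_def u_def w_def Q_def by auto
  have Esym: "\<And>i j. E i j \<Longrightarrow> E j i" and EV: "\<And>i j. E i j \<Longrightarrow> i \<in> V \<and> j \<in> V"
    and finV: "finite V"
    using graph unfolding simple_graph_def by auto
  have Csym: "\<And>i j. E i j \<Longrightarrow> C j i = C i j" and Cnn: "\<And>i j. E i j \<Longrightarrow> C i j \<ge> 0"
    using C_adm unfolding admissible_cond_def by metis+
  have Qanti: "Q j i = - Q i j" if "E i j" for i j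
  proof -
    have "L j i = L i j" using L_sym that by metis
    moreover have "C i j * (P j - P i) / L i j = - (C i j * (P i - P j) / L i j)"
      by (simp add: diff_divide_distrib right_diff_distrib)
    moreover have "Q j i = C j i * (P j - P i) / L j i" unfolding Q_def flux_def ..
    moreover have "Q i j = C i j * (P i - P j) / L i j" unfolding Q_def flux_def ..
    ultimately show ?thesis using Csym[OF that] by metis
  qed
  define cnt where "cnt i j = (\<Sum>k<n. (if i = u k \<and> j = w k then 1 else 0) :: real)" for i j
  define D where "D i j = cnt i j - cnt j i" for i j
  have Danti: "D j i = - D i j" for i j
    unfolding D_def by simp
  have cnt_bound: "\<bar>cnt i j\<bar> \<le> n" for i j
  proof -
    have "\<bar>cnt i j\<bar> \<le> (\<Sum>k<n. \<bar>(if i = u k \<and> j = w k then 1 else 0) :: real\<bar>)"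
      unfolding cnt_def by (rule sum_abs)
    also have "\<dots> \<le> (\<Sum>k<n. 1)" by (rule sum_mono) auto
    finally show ?thesis by simp
  qed
  have Dbound: "\<bar>D i j\<bar> \<le> 2 * n" for i j
    using cnt_bound[of i j] cnt_bound[of j i] unfolding D_def by linarith
  have cnt_supp: "\<exists>k<n. i = u k \<and> j = w k" if "cnt i j \<noteq> 0" for i j
  proof (rule ccontr)
    assume "\<not> ?thesis"
    then have "cnt i j = 0" unfolding cnt_def by (intro sum.neutral) auto
    with that show False by simp
  qed
  have Dsupp: "\<exists>k<n. (i = u k \<and> j = w k) \<or> (i = w k \<and> j = u k)" if "D i j \<noteq> 0" for i j
  proof -
    have "cnt i j \<noteq> 0 \<or> cnt j i \<noteq> 0" using that unfolding D_def by auto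
    then show ?thesis using cnt_supp[of i j] cnt_supp[of j i] by blast
  qed
  have DQ: "Q i j \<noteq> 0 \<and> E i j" if D0: "D i j \<noteq> 0" for i j
  proof -
    obtain k where k: "k < n" "(i = u k \<and> j = w k) \<or> (i = w k \<and> j = u k)" using Dsupp[OF D0] by blast
    have q1: "Q (u k) (w k) \<noteq> 0" and e1: "E (u k) (w k)" using Qcyc[OF k(1)] Ecyc[OF k(1)] by blast+
    have q2: "Q (w k) (u k) \<noteq> 0" using q1 Qanti[OF e1] by simp
    have e2: "E (w k) (u k)" using Esym[OF e1] .
    from k(2) show ?thesis
    proof
      assume "i = u k \<and> j = w k" then show ?thesis using q1 e1 by simp
    next
      assume "i = w k \<and> j = u k" then show ?thesis using q2 e2 by simp
    qed
  qed
  define m where "m = Min ((\<lambda>k. \<bar>Q (u k) (w k)\<bar>) ` {..<n})"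
  have "0 \<in> {..<n}" using n3 by simp
  then have nne: "{..<n} \<noteq> {}" by blast
  have m_pos: "m > 0" unfolding m_def using nne Qcyc by (subst Min_gr_iff) auto
  have m_le: "m \<le> \<bar>Q (u k) (w k)\<bar>" if "k < n" for k
    unfolding m_def using that by (intro Min_le) auto
  have Qbig: "m \<le> \<bar>Q i j\<bar>" if D0: "D i j \<noteq> 0" for i j
  proof -
    obtain k where k: "k < n" "(i = u k \<and> j = w k) \<or> (i = w k \<and> j = u k)" using Dsupp[OF D0] by blast
    have q1: "m \<le> \<bar>Q (u k) (w k)\<bar>" using m_le[OF k(1)] .
    have q2: "m \<le> \<bar>Q (w k) (u k)\<bar>" using q1 Qanti[OF Ecyc[OF k(1)]] by simp
    from k(2) show ?thesis
    proof
      assume "i = u k \<and> j = w k" then show ?thesis using q1 by simp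
    next
      assume "i = w k \<and> j = u k" then show ?thesis using q2 by simp
    qed
  qed
  define t where "t = m / (2 * (2 * real n + 1))"
  have t_pos: "t > 0" unfolding t_def using m_pos by simp
  have small: "\<bar>\<tau> * D i j / Q i j\<bar> < 1" if "\<bar>\<tau>\<bar> \<le> t" for \<tau> i j
  proof (cases "D i j = 0")
    case True then show ?thesis by simp
  next
    case False
    have Qp: "\<bar>Q i j\<bar> \<ge> m" using Qbig[OF False] .
    have "\<bar>\<tau> * D i j\<bar> \<le> t * (2 * n)" using that Dbound[of i j] t_pos
      by (simp add: abs_mult mult_mono)
    also have "\<dots> < m" unfolding t_def using m_pos by (simp add: field_simps) (intro add_pos_nonneg, auto)
    finally have "\<bar>\<tau> * D i j\<bar> < \<bar>Q i j\<bar>" using Qp by simp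
    then show ?thesis using m_pos Qp by (simp add: abs_div)
  qed
  define C' where "C' \<tau> i j = C i j * (1 + \<tau> * D i j / Q i j)" for \<tau> i j
  have C'0: "C' 0 = C" unfolding C'_def by (intro ext) simp
  have adm: "admissible_cond E (C' \<tau>)" if "\<bar>\<tau>\<bar> \<le> t" for \<tau>
    unfolding admissible_cond_def
  proof (intro allI impI conjI)
    fix i j assume Eij: "E i j"
    have "1 + \<tau> * D i j / Q i j > 0" using small[OF that, of i j] by linarith
    then show "C' \<tau> i j \<ge> 0" unfolding C'_def using Cnn[OF Eij] by simp
    show "C' \<tau> i j = C' \<tau> j i" unfolding C'_def using Csym[OF Eij] Qanti[OF Eij] Danti[of i j]
      by simp
  qed
  have flux': "flux L (C' \<tau>) P i j = Q i j + \<tau> * D i j" for \<tau> i j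
  proof (cases "D i j = 0")
    case True then show ?thesis unfolding C'_def Q_def flux_def by simp
  next
    case False
    then have Qn: "Q i j \<noteq> 0" using DQ by blast
    have h: "C i j * X * (P i - P j) / L i j = (C i j * (P i - P j) / L i j) * X" for X
      by (simp add: times_divide_eq_left mult.commute mult.left_commute)
    have "flux L (C' \<tau>) P i j = Q i j * (1 + \<tau> * D i j / Q i j)"
      unfolding flux_def C'_def h unfolding Q_def flux_def ..
    also have "\<dots> = Q i j + \<tau> * D i j" using Qn by (simp add: distrib_left)
    finally show ?thesis .
  qed
  have Dsum: "(\<Sum>j\<in>nbrs V E i. D i j) = 0" if "i \<in> V" for i
  proof -
    have fin: "finite (nbrs V E i)" using finV unfolding nbrs_def by simp
    have c1: "(\<Sum>j\<in>nbrs V E i. cnt i j) = (\<Sum>k<n. (if i = u k then 1 else 0))"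
    proof -
      have "(\<Sum>j\<in>nbrs V E i. cnt i j) = (\<Sum>k<n. \<Sum>j\<in>nbrs V E i. (if i = u k \<and> j = w k then 1 else 0) :: real)"
        unfolding cnt_def by (rule sum.swap)
      also have "\<dots> = (\<Sum>k<n. (if i = u k then 1 else 0))"
      proof (rule sum.cong[OF refl])
        fix k assume "k \<in> {..<n}"
        then have k: "k < n" by simp
        have a: "w k \<in> nbrs V E (u k)" using Ecyc[OF k] EV[OF Ecyc[OF k]] unfolding nbrs_def by auto
        show "(\<Sum>j\<in>nbrs V E i. (if i = u k \<and> j = w k then 1 else 0) :: real) = (if i = u k then 1 else 0)"
          using a fin by (cases "i = u k") simp_all
      qed
      finally show ?thesis .
    qed
    have c2: "(\<Sum>j\<in>nbrs V E i. cnt j i) = (\<Sum>k<n. (if i = w k then 1 else 0))"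
    proof -
      have "(\<Sum>j\<in>nbrs V E i. cnt j i) = (\<Sum>k<n. \<Sum>j\<in>nbrs V E i. (if j = u k \<and> i = w k then 1 else 0) :: real)"
        unfolding cnt_def by (rule sum.swap)
      also have "\<dots> = (\<Sum>k<n. (if i = w k then 1 else 0))"
      proof (rule sum.cong[OF refl])
        fix k assume "k \<in> {..<n}"
        then have k: "k < n" by simp
        have b: "u k \<in> nbrs V E (w k)" using EV[OF Ecyc[OF k]] Esym[OF Ecyc[OF k]] unfolding nbrs_def by auto
        show "(\<Sum>j\<in>nbrs V E i. (if j = u k \<and> i = w k then 1 else 0) :: real) = (if i = w k then 1 else 0)"
          using b fin by (cases "i = w k") simp_all
      qed
      finally show ?thesis .
    qed
    have "(\<Sum>j\<in>nbrs V E i. D i j) = (\<Sum>k<n. (if i = u k then 1 else 0)) - (\<Sum>k<n. (if i = w k then 1 else 0))"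
      unfolding D_def sum_subtractf c1 c2 ..
    also have "\<dots> = (\<Sum>k<n. (if i = u k then 1 else 0)) - (\<Sum>k<n. (if i = u ((k+1) mod n) then 1 else 0 :: real))"
      unfolding w_def u_def ..
    also have "\<dots> = 0" using rot_sum[of n "\<lambda>k. if i = u k then 1 else 0"] n3 by simp
    finally show ?thesis .
  qed
  have kir: "kirchhoff V E L S (C' \<tau>) P" for \<tau>
    unfolding kirchhoff_def
  proof
    fix i assume i: "i \<in> V"
    have "(\<Sum>j\<in>nbrs V E i. flux L (C' \<tau>) P i j) = (\<Sum>j\<in>nbrs V E i. Q i j) + \<tau> * (\<Sum>j\<in>nbrs V E i. D i j)"
      unfolding flux' by (simp add: sum.distrib sum_distrib_left)
    also have "\<dots> = S i" using P_kirch i Dsum[OF i] unfolding kirchhoff_def Q_def by simp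
    finally show "(\<Sum>j\<in>nbrs V E i. flux L (C' \<tau>) P i j) = S i" .
  qed
  define A where "A = {(i,j). i \<in> V \<and> j \<in> V \<and> E i j \<and> i < j}"
  define T where "T \<tau> i j = ((flux L (C' \<tau>) P i j)\<^sup>2 / C' \<tau> i j + \<nu> / \<gamma> * (C' \<tau> i j) powr \<gamma>) * L i j" for \<tau> i j
  have en: "energy V E L \<nu> \<gamma> (C' \<tau>) P = (\<Sum>(i,j)\<in>A. T \<tau> i j)" for \<tau>
    unfolding energy_def A_def T_def ..
  have finA: "finite A" unfolding A_def
    by (rule finite_subset[of _ "V \<times> V"]) (use finV in auto)
  have pt: "T t i j + T (-t) i j \<le> 2 * T 0 i j" and
       pts: "D i j \<noteq> 0 \<Longrightarrow> T t i j + T (-t) i j < 2 * T 0 i j" if "E i j" for i j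
  proof -
    show s: "D i j \<noteq> 0 \<Longrightarrow> T t i j + T (-t) i j < 2 * T 0 i j"
    proof -
      assume D0: "D i j \<noteq> 0"
      have Qn: "Q i j \<noteq> 0" using DQ[OF D0] by blast
      have Cp: "C i j > 0"
      proof -
        have "C i j \<noteq> 0" using Qn unfolding Q_def flux_def by auto
        then show ?thesis using Cnn[OF that] by simp
      qed
      define s where "s = t * D i j / Q i j"
      have s1: "\<bar>s\<bar> < 1" unfolding s_def using small[of t] t_pos by simp
      have s0: "s \<noteq> 0" unfolding s_def using t_pos D0 Qn by simp
      have f1: "Q i j + t * D i j = Q i j * (1+s)" unfolding s_def using Qn by (simp add: field_simps)
      have f2: "Q i j + (-t) * D i j = Q i j * (1-s)" unfolding s_def using Qn by (simp add: field_simps)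
      have c1: "C' t i j = C i j * (1+s)" unfolding C'_def s_def ..
      have c2: "C' (-t) i j = C i j * (1-s)" unfolding C'_def s_def by simp
      have "T t i j = ((Q i j*(1+s))\<^sup>2/(C i j*(1+s)) + \<nu>/\<gamma>*(C i j*(1+s)) powr \<gamma>)*L i j"
        unfolding T_def flux' f1 c1 ..
      moreover have "T (-t) i j = ((Q i j*(1-s))\<^sup>2/(C i j*(1-s)) + \<nu>/\<gamma>*(C i j*(1-s)) powr \<gamma>)*L i j"
        unfolding T_def flux' f2 c2 ..
      moreover have "T 0 i j = ((Q i j)\<^sup>2/C i j + \<nu>/\<gamma>*C i j powr \<gamma>)*L i j"
        unfolding T_def C'0 Q_def ..
      ultimately show ?thesis
        using term_pair[OF Cp Qn _ nu gamma s1 s0, of "L i j"] L_pos that by simp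
    qed
    show "T t i j + T (-t) i j \<le> 2 * T 0 i j"
    proof (cases "D i j = 0")
      case True
      then have "C' t i j = C i j" "C' (-t) i j = C i j" "C' 0 i j = C i j" unfolding C'_def by simp_all
      moreover have "flux L (C' t) P i j = Q i j" "flux L (C' (-t)) P i j = Q i j" "flux L (C' 0) P i j = Q i j"
        using True flux' by simp_all
      ultimately show ?thesis unfolding T_def by simp
    next
      case False then show ?thesis using s by simp
    qed
  qed
  have D01: "D (u 0) (w 0) = 1"
  proof -
    have vsne: "vs \<noteq> []" using n3 unfolding n_def by auto
    have ui: "u k = u 0 \<longleftrightarrow> k = 0" if "k < n" for k
      using nth_eq_iff_index_eq[OF dist, of k 0] that n3 vsne unfolding u_def n_def by auto
    have w0: "w 0 = vs ! 1" unfolding w_def using n3 by simp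
    have "(\<Sum>k<n. (if u 0 = u k \<and> w 0 = w k then 1 else 0) :: real) = (\<Sum>k<n. if k = 0 then 1 else 0)"
    proof (rule sum.cong[OF refl])
      fix k assume "k \<in> {..<n}"
      then have k: "k < n" by simp
      show "(if u 0 = u k \<and> w 0 = w k then 1 else 0) = (if k = 0 then 1 else (0::real))"
      proof (cases "k = 0")
        case False
        then have "u 0 \<noteq> u k" using ui[OF k] by metis
        then show ?thesis using False by simp
      qed simp
    qed
    also have "\<dots> = 1" using n3 by simp
    finally have a: "(\<Sum>k<n. (if u 0 = u k \<and> w 0 = w k then 1 else 0) :: real) = 1" .
    have "(\<Sum>k<n. (if w 0 = u k \<and> u 0 = w k then 1 else 0) :: real) = 0"
    proof (rule sum.neutral, intro ballI)
      fix k assume "k \<in> {..<n}"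
      then have k: "k < n" by simp
      show "(if w 0 = u k \<and> u 0 = w k then 1 else 0) = (0::real)"
      proof (cases "w 0 = u k")
        case True
        then have "k = 1" using nth_eq_iff_index_eq[OF dist, of 1 k] w0 k n3 vsne unfolding u_def n_def by auto
        then have "w k = vs ! 2" unfolding w_def using n3 by (simp add: numeral_2_eq_2)
        then have "u 0 \<noteq> w k" using nth_eq_iff_index_eq[OF dist, of 0 2] n3 vsne unfolding u_def n_def by auto
        then show ?thesis by simp
      qed simp
    qed
    with a show ?thesis unfolding D_def cnt_def by simp
  qed
  have E0: "E (u 0) (w 0)" using Ecyc n3 by simp
  have ne: "u 0 \<noteq> w 0" using E0 graph unfolding simple_graph_def by blast
  define p where "p = (min (u 0) (w 0), max (u 0) (w 0))"
  have pA: "p \<in> A" and pD: "D (fst p) (snd p) \<noteq> 0" and pE: "E (fst p) (snd p)"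
    using E0 EV[OF E0] ne D01 Danti[of "u 0" "w 0"] Esym[OF E0]
    unfolding p_def A_def by (auto simp: min_def max_def)
  have "(\<Sum>(i,j)\<in>A. T t i j + T (-t) i j) < (\<Sum>(i,j)\<in>A. 2 * T 0 i j)"
  proof (rule sum_strict_mono_ex1[OF finA])
    show "\<forall>x\<in>A. (case x of (i, j) \<Rightarrow> T t i j + T (- t) i j) \<le> (case x of (i, j) \<Rightarrow> 2 * T 0 i j)"
      using pt unfolding A_def by auto
    show "\<exists>x\<in>A. (case x of (i, j) \<Rightarrow> T t i j + T (- t) i j) < (case x of (i, j) \<Rightarrow> 2 * T 0 i j)"
      using pA pts[OF pE pD] by (intro bexI[of _ p]) (auto simp: case_prod_beta)
  qed
  then have "energy V E L \<nu> \<gamma> (C' t) P + energy V E L \<nu> \<gamma> (C' (-t)) P < 2 * energy V E L \<nu> \<gamma> (C' 0) P"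
    unfolding en by (simp add: sum.distrib sum_distrib_left case_prod_beta)
  moreover have "energy V E L \<nu> \<gamma> C P \<le> energy V E L \<nu> \<gamma> (C' t) P"
    using C_min adm[of t] kir[of t] t_pos by auto
  moreover have "energy V E L \<nu> \<gamma> C P \<le> energy V E L \<nu> \<gamma> (C' (-t)) P"
    using C_min adm[of "-t"] kir[of "-t"] t_pos by auto
  ultimately show False unfolding C'0 by linarith
qed
end
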